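(* For every open interval $I$ of $\mathbb{Z}^{\omega}$ there is an order-isomorphism $f_I: \mathbb{Z}^{\omega}\to I$ such that $f_I[A] = A\cap I$ for every subset $A\subseteq \mathbb{Z}^{\omega}$ that is closed under tail-equivalence.
   Context: $\mathbb{Z}^{\omega}$ is the set of integer sequences with the lexicographic order ($u<v$ iff $u_n<v_n$ at the least $n$ with $u_n\ne v_n$). For a finite nonempty integer sequence $r$ and a sequence $u$, $ru$ is concatenation. $u,v\in\mathbb{Z}^{\omega}$ are tail-equivalent if $u=ru'$ and $v=su'$ for some finite sequences $r,s$ (possibly of different lengths) and some $u'\in\mathbb{Z}^{\omega}$; $A$ is closed under tail-equivalence if it is a union of tail-equivalence classes. An open interval of a linear order is a nonempty convex subset with neither a greatest nor a least element. *)

theory Defs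
  imports Main
begin

text \<open>Elements of Z^omega are represented as functions nat => int.\<close>

definition lex_less :: "(nat \<Rightarrow> int) \<Rightarrow> (nat \<Rightarrow> int) \<Rightarrow> bool" where
  "lex_less u v \<longleftrightarrow> (\<exists>n. u n < v n \<and> (\<forall>m<n. u m = v m))"

text \<open>u = r u', v = s u' for finite r, s: dropping k resp. l initial entries gives the same tail.\<close>
definition tail_equiv :: "(nat \<Rightarrow> int) \<Rightarrow> (nat \<Rightarrow> int) \<Rightarrow> bool" where
  "tail_equiv u v \<longleftrightarrow> (\<exists>k l. \<forall>n. u (k + n) = v (l + n))"

definition tail_closed :: "(nat \<Rightarrow> int) set \<Rightarrow> bool" where
  "tail_closed A \<longleftrightarrow> (\<forall>u v. u \<in> A \<longrightarrow> tail_equiv u v \<longrightarrow> v \<in> A)"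

definition open_interval :: "(nat \<Rightarrow> int) set \<Rightarrow> bool" where
  "open_interval I \<longleftrightarrow> I \<noteq> {}
     \<and> (\<forall>x y z. x \<in> I \<longrightarrow> z \<in> I \<longrightarrow> lex_less x y \<longrightarrow> lex_less y z \<longrightarrow> y \<in> I)
     \<and> (\<forall>x\<in>I. \<exists>y\<in>I. lex_less x y)
     \<and> (\<forall>x\<in>I. \<exists>y\<in>I. lex_less y x)"

definition order_iso_onto :: "((nat \<Rightarrow> int) \<Rightarrow> (nat \<Rightarrow> int)) \<Rightarrow> (nat \<Rightarrow> int) set \<Rightarrow> bool" where
  "order_iso_onto f I \<longleftrightarrow> bij_betw f UNIV I \<and> (\<forall>u v. lex_less u v \<longleftrightarrow> lex_less (f u) (f v))"

end

theory Submission imports Defs "HOL-Library.Fun_Lexorder" begin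

definition cns :: "int \<Rightarrow> (nat \<Rightarrow> int) \<Rightarrow> nat \<Rightarrow> int" where
  "cns k w n = (case n of 0 \<Rightarrow> k | Suc m \<Rightarrow> w m)"
definition tlf :: "(nat \<Rightarrow> int) \<Rightarrow> nat \<Rightarrow> int" where
  "tlf u n = u (Suc n)"

lemma cns_0[simp]: "cns k w 0 = k" by (simp add: cns_def)
lemma cns_Suc[simp]: "cns k w (Suc n) = w n" by (simp add: cns_def)
lemma tlf_cns[simp]: "tlf (cns k w) = w" by (simp add: tlf_def fun_eq_iff)
lemma cns_tlf[simp]: "cns (u 0) (tlf u) = u"
  by (auto simp: fun_eq_iff cns_def tlf_def split: nat.split)
lemma tlf_app[simp]: "tlf u n = u (Suc n)" by (simp add: tlf_def)

lemma lex_eq: "lex_less u v \<longleftrightarrow> u 0 < v 0 \<or> (u 0 = v 0 \<and> lex_less (tlf u) (tlf v))"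
proof
  assume "lex_less u v"
  then obtain n where n: "u n < v n" "\<forall>m<n. u m = v m" unfolding lex_less_def by blast
  show "u 0 < v 0 \<or> (u 0 = v 0 \<and> lex_less (tlf u) (tlf v))"
  proof (cases n)
    case 0 then show ?thesis using n by simp
  next
    case (Suc k)
    then have "u 0 = v 0" using n by auto
    moreover have "lex_less (tlf u) (tlf v)" unfolding lex_less_def
      using n Suc by (intro exI[of _ k]) auto
    ultimately show ?thesis by simp
  qed
next
  assume "u 0 < v 0 \<or> (u 0 = v 0 \<and> lex_less (tlf u) (tlf v))"
  then show "lex_less u v"
  proof
    assume "u 0 < v 0" then show ?thesis unfolding lex_less_def by (intro exI[of _ 0]) auto
  next
    assume h: "u 0 = v 0 \<and> lex_less (tlf u) (tlf v)"
    then obtain n where n: "u (Suc n) < v (Suc n)" "\<forall>m<n. u (Suc m) = v (Suc m)"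
      unfolding lex_less_def by auto
    show ?thesis unfolding lex_less_def
    proof (intro exI[of _ "Suc n"] conjI allI impI)
      fix m assume "m < Suc n" then show "u m = v m" using n h by (cases m) auto
    qed (use n in auto)
  qed
qed

lemma lex_cns: "lex_less (cns a x) (cns b y) \<longleftrightarrow> a < b \<or> (a = b \<and> lex_less x y)"
  by (subst lex_eq) simp

lemma lex_irrefl[simp]: "\<not> lex_less u u"
  using less_fun_irrefl unfolding lex_less_def less_fun_def by blast

lemma lex_trans: "lex_less u v \<Longrightarrow> lex_less v w \<Longrightarrow> lex_less u w"
  using less_fun_trans unfolding lex_less_def less_fun_def by blast

lemma lex_asym: "lex_less u v \<Longrightarrow> \<not> lex_less v u"
  using lex_trans lex_irrefl by blast

lemma lex_total: "u \<noteq> v \<Longrightarrow> lex_less u v \<or> lex_less v u"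
proof -
  assume "u \<noteq> v"
  then obtain k where "u k \<noteq> v k" by auto
  define n where "n = (LEAST k. u k \<noteq> v k)"
  have "u n \<noteq> v n" unfolding n_def by (rule LeastI) fact
  moreover have "\<forall>m<n. u m = v m" unfolding n_def using not_less_Least by blast
  ultimately show ?thesis unfolding lex_less_def
    by (cases "u n < v n") (auto intro!: exI[of _ n])
qed

lemma lex_0: "lex_less u v \<Longrightarrow> u 0 \<le> v 0"
  by (subst (asm) lex_eq) auto

lemma te_refl: "tail_equiv u u" unfolding tail_equiv_def by blast
lemma te_sym: "tail_equiv u v \<Longrightarrow> tail_equiv v u" unfolding tail_equiv_def by metis
lemma te_trans: "tail_equiv u v \<Longrightarrow> tail_equiv v w \<Longrightarrow> tail_equiv u w"
proof -
  assume "tail_equiv u v" "tail_equiv v w"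
  then obtain k l k' l' where a: "\<forall>n. u (k+n) = v (l+n)" and b: "\<forall>n. v (k'+n) = w (l'+n)"
    unfolding tail_equiv_def by blast
  have "\<forall>n. u ((k+k')+n) = w ((l'+l)+n)"
  proof
    fix n
    have "u ((k+k')+n) = v (l+(k'+n))" using a by (metis add.assoc)
    also have "\<dots> = v (k' + (l+n))" by (simp add: algebra_simps)
    also have "\<dots> = w ((l'+l)+n)" using b by (metis add.assoc)
    finally show "u ((k+k')+n) = w ((l'+l)+n)" .
  qed
  then show ?thesis unfolding tail_equiv_def by blast
qed
lemma te_tlf: "tail_equiv u (tlf u)"
  unfolding tail_equiv_def by (intro exI[of _ 1] exI[of _ 0]) simp
lemma te_cns: "tail_equiv (cns k w) w"
  unfolding tail_equiv_def by (intro exI[of _ 1] exI[of _ 0]) simp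
lemma te_cns_tlf: "tail_equiv (cns k (tlf u)) u"
  using te_cns te_tlf te_sym te_trans by blast

definition zr :: "nat \<Rightarrow> int" where "zr = (\<lambda>_. 0)"
lemma zr_0[simp]: "zr n = 0" by (simp add: zr_def)
lemma tlf_zr[simp]: "tlf zr = zr" by (simp add: fun_eq_iff)
lemma cns_zr[simp]: "cns 0 zr = zr" by (auto simp: fun_eq_iff cns_def split: nat.split)

definition gH :: "(nat \<Rightarrow> int) \<Rightarrow> nat \<Rightarrow> int" where
  "gH w = (if lex_less w zr then cns 0 w else w)"

lemma gH_0: "0 \<le> gH w 0"
proof (cases "lex_less w zr")
  case True then show ?thesis by (simp add: gH_def)
next
  case False
  then have "w = zr \<or> lex_less zr w" using lex_total by blast
  then show ?thesis using lex_0[of zr w] by (auto simp: gH_def)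
qed

lemma gH_mono: "lex_less u v \<Longrightarrow> lex_less (gH u) (gH v)"
proof -
  assume uv: "lex_less u v"
  show ?thesis
  proof (cases "lex_less u zr")
    case u: True
    show ?thesis
    proof (cases "lex_less v zr")
      case True then show ?thesis using u uv by (simp add: gH_def lex_cns)
    next
      case False
      then have "v = zr \<or> lex_less zr v" using lex_total by blast
      moreover have "lex_less (cns 0 u) zr" using u lex_cns[of 0 u 0 zr] by simp
      ultimately show ?thesis using u False by (auto simp: gH_def intro: lex_trans)
    qed
  next
    case u: False
    then have "u = zr \<or> lex_less zr u" using lex_total by blast
    then have "\<not> lex_less v zr" using uv lex_trans lex_asym by blast
    then show ?thesis using u uv by (simp add: gH_def)
  qed
qed

lemma gH_onto: "0 \<le> v 0 \<Longrightarrow> \<exists>w. gH w = v"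
proof -
  assume v0: "0 \<le> v 0"
  show ?thesis
  proof (cases "lex_less v zr")
    case True
    then have "v 0 \<le> 0" using lex_0 by fastforce
    with v0 have e: "v 0 = 0" by simp
    with True have "lex_less (tlf v) zr" using lex_eq[of v zr] by simp
    then have "gH (tlf v) = cns (v 0) (tlf v)" using e by (simp add: gH_def)
    then show ?thesis by auto
  next
    case False then show ?thesis by (auto simp: gH_def)
  qed
qed

lemma gH_te: "tail_equiv (gH w) w"
  by (simp add: gH_def te_cns te_refl)

definition kap :: "(nat \<Rightarrow> int) \<Rightarrow> nat \<Rightarrow> int" where
  "kap u = (if u 0 = -1 then gH (tlf u) else cns (u 0 + 1) (tlf u))"

lemma kap_mono: "u 0 < 0 \<Longrightarrow> v 0 < 0 \<Longrightarrow> lex_less u v \<Longrightarrow> lex_less (kap u) (kap v)"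
proof -
  assume u0: "u 0 < 0" and v0: "v 0 < 0" and uv: "lex_less u v"
  have le: "u 0 \<le> v 0" using lex_0 uv by blast
  show ?thesis
  proof (cases "u 0 = -1")
    case True
    then have "v 0 = -1" using le v0 by simp
    then have "lex_less (tlf u) (tlf v)" using uv True lex_eq[of u v] by simp
    then show ?thesis using True \<open>v 0 = -1\<close> by (simp add: kap_def gH_mono)
  next
    case False
    show ?thesis
    proof (cases "v 0 = -1")
      case True
      have "cns (u 0 + 1) (tlf u) 0 < gH (tlf v) 0" using gH_0[of "tlf v"] u0 False by simp
      then show ?thesis using True False by (simp add: kap_def lex_eq[of "cns _ _"])
    next
      case False2: False
      show ?thesis using False False2 uv by (auto simp add: kap_def lex_cns lex_eq[of u v])
    qed
  qed
qed

lemma kap_onto: "\<exists>u. u 0 < 0 \<and> kap u = w"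
proof (cases "w 0 < 0")
  case True
  then show ?thesis by (intro exI[of _ "cns (w 0 - 1) (tlf w)"]) (simp add: kap_def)
next
  case False
  then obtain w' where "gH w' = w" using gH_onto by force
  then show ?thesis by (intro exI[of _ "cns (-1) w'"]) (simp add: kap_def)
qed

lemma kap_te: "tail_equiv (kap u) u"
proof (cases "u 0 = -1")
  case True
  have "tail_equiv (gH (tlf u)) (tlf u)" by (rule gH_te)
  moreover have "tail_equiv (tlf u) u" using te_tlf te_sym by blast
  ultimately show ?thesis using True te_trans unfolding kap_def by simp
next
  case False then show ?thesis unfolding kap_def using te_cns_tlf by simp
qed

lemma kap_dec2: "u 0 < 0 \<Longrightarrow> u 0 < kap u 0"
  using gH_0[of "tlf u"] by (auto simp: kap_def)

lemma kap_dec: "\<not> 0 \<le> u 0 \<Longrightarrow> nat (- kap u 0) < nat (- u 0)"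
  using gH_0[of "tlf u"] by (auto simp: kap_def)

definition fseg :: "(nat \<Rightarrow> int) set \<Rightarrow> bool" where
  "fseg F \<longleftrightarrow> F \<noteq> {} \<and> (\<forall>x y. x \<in> F \<longrightarrow> lex_less x y \<longrightarrow> y \<in> F) \<and> (\<forall>x\<in>F. \<exists>y\<in>F. lex_less y x)"

definition c0 :: "(nat \<Rightarrow> int) set \<Rightarrow> int" where
  "c0 F = (SOME k. (\<exists>x\<in>F. x 0 = k) \<and> (\<forall>x\<in>F. k \<le> x 0))"

definition sub :: "(nat \<Rightarrow> int) set \<Rightarrow> (nat \<Rightarrow> int) set" where
  "sub F = {w. cns (c0 F) w \<in> F}"

lemma c0_prop:
  assumes "fseg F" "F \<noteq> UNIV"
  shows "(\<exists>x\<in>F. x 0 = c0 F) \<and> (\<forall>x\<in>F. c0 F \<le> x 0)"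
proof -
  obtain z where z: "z \<notin> F" using assms(2) by blast
  have zb: "z 0 \<le> x 0" if "x \<in> F" for x
  proof -
    have "x \<noteq> z" using that z by blast
    moreover have "\<not> lex_less x z" using that z assms(1) unfolding fseg_def by blast
    ultimately have "lex_less z x" using lex_total by blast
    then show ?thesis using lex_0 by blast
  qed
  obtain x0 where "x0 \<in> F" using assms(1) unfolding fseg_def by blast
  then obtain x where x: "x \<in> F" "\<forall>y. y \<in> F \<longrightarrow> nat (x 0 - z 0) \<le> nat (y 0 - z 0)"
    using ex_has_least_nat[of "\<lambda>y. y \<in> F" x0 "\<lambda>y. nat (y 0 - z 0)"] by blast
  have "\<forall>y\<in>F. x 0 \<le> y 0"
  proof
    fix y assume "y \<in> F"
    then show "x 0 \<le> y 0" using x zb[of x] zb[of y] by fastforce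
  qed
  then have "\<exists>k. (\<exists>x\<in>F. x 0 = k) \<and> (\<forall>x\<in>F. k \<le> x 0)" using x by blast
  then show ?thesis unfolding c0_def by (rule someI_ex)
qed

lemma mem_iff:
  assumes "fseg F" "F \<noteq> UNIV"
  shows "v \<in> F \<longleftrightarrow> c0 F < v 0 \<or> (v 0 = c0 F \<and> tlf v \<in> sub F)"
proof
  assume "v \<in> F"
  moreover have "c0 F \<le> v 0" using c0_prop[OF assms] \<open>v \<in> F\<close> by blast
  moreover have "v 0 = c0 F \<Longrightarrow> tlf v \<in> sub F" using \<open>v \<in> F\<close> unfolding sub_def
    by (metis cns_tlf mem_Collect_eq)
  ultimately show "c0 F < v 0 \<or> (v 0 = c0 F \<and> tlf v \<in> sub F)" by linarith
next
  assume h: "c0 F < v 0 \<or> (v 0 = c0 F \<and> tlf v \<in> sub F)"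
  then show "v \<in> F"
  proof
    assume "c0 F < v 0"
    obtain x where "x \<in> F" "x 0 = c0 F" using c0_prop[OF assms] by blast
    then have "lex_less x v" using \<open>c0 F < v 0\<close> lex_eq[of x v] by simp
    then show ?thesis using \<open>x \<in> F\<close> assms(1) unfolding fseg_def by blast
  next
    assume "v 0 = c0 F \<and> tlf v \<in> sub F"
    then show ?thesis unfolding sub_def by (metis cns_tlf mem_Collect_eq)
  qed
qed

lemma fseg_sub:
  assumes "fseg F" "F \<noteq> UNIV"
  shows "fseg (sub F)"
  unfolding fseg_def
proof (intro conjI allI impI ballI)
  obtain x where "x \<in> F" "x 0 = c0 F" using c0_prop[OF assms] by blast
  then show "sub F \<noteq> {}" unfolding sub_def by (metis cns_tlf empty_iff mem_Collect_eq)
next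
  fix x y assume "x \<in> sub F" "lex_less x y"
  then show "y \<in> sub F" using assms(1) unfolding sub_def fseg_def by (auto simp: lex_cns)
next
  fix x assume x: "x \<in> sub F"
  then have "cns (c0 F) x \<in> F" unfolding sub_def by simp
  then obtain y where y: "y \<in> F" "lex_less y (cns (c0 F) x)" using assms(1) unfolding fseg_def by blast
  then have "y 0 \<le> c0 F" using lex_0 by fastforce
  then have "y 0 = c0 F" using c0_prop[OF assms] y by force
  then have "tlf y \<in> sub F" "lex_less (tlf y) x" using y mem_iff[OF assms, of y] lex_eq[of y] by auto
  then show "\<exists>y\<in>sub F. lex_less y x" by blast
qed

function phi :: "(nat \<Rightarrow> int) set \<Rightarrow> (nat \<Rightarrow> int) \<Rightarrow> nat \<Rightarrow> int" where
  "phi F u = (if F = UNIV then u else if 0 \<le> u 0 then cns (u 0 + c0 F + 1) (tlf u)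
              else cns (c0 F) (phi (sub F) (kap u)))"
  by auto
termination
  apply (relation "measure (\<lambda>(F,u). nat (- u 0))")
   apply simp
  using kap_dec2 by fastforce

declare phi.simps[simp del]

lemma phi_in: "fseg F \<Longrightarrow> phi F u \<in> F"
proof (induction F u rule: phi.induct)
  case (1 F u)
  show ?case
  proof (cases "F = UNIV")
    case True then show ?thesis by simp
  next
    case nU: False
    show ?thesis
    proof (cases "0 \<le> u 0")
      case True then show ?thesis using nU mem_iff[OF "1.prems" nU] by (simp add: phi.simps)
    next
      case False
      have "phi (sub F) (kap u) \<in> sub F" using 1 nU False fseg_sub by blast
      then show ?thesis using nU False mem_iff[OF "1.prems" nU] by (simp add: phi.simps)
    qed
  qed
qed

lemma phi_te: "tail_equiv (phi F u) u"
proof (induction F u rule: phi.induct)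
  case (1 F u)
  show ?case
  proof (cases "F = UNIV")
    case True then show ?thesis by (simp add: phi.simps te_refl)
  next
    case nU: False
    show ?thesis
    proof (cases "0 \<le> u 0")
      case True then show ?thesis using nU by (simp add: phi.simps te_cns_tlf)
    next
      case False
      have a: "tail_equiv (phi (sub F) (kap u)) (kap u)" using 1 nU False by blast
      have "tail_equiv (cns (c0 F) (phi (sub F) (kap u))) u"
        using te_trans[OF te_cns te_trans[OF a kap_te]] .
      then show ?thesis using nU False by (simp add: phi.simps)
    qed
  qed
qed

lemma phi_mono: "fseg F \<Longrightarrow> lex_less u v \<Longrightarrow> lex_less (phi F u) (phi F v)"
proof (induction F u arbitrary: v rule: phi.induct)
  case (1 F u)
  show ?case
  proof (cases "F = UNIV")
    case True then show ?thesis using 1 by (simp add: phi.simps)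
  next
    case nU: False
    have le: "u 0 \<le> v 0" using lex_0 "1.prems"(2) by blast
    show ?thesis
    proof (cases "0 \<le> u 0")
      case True
      then show ?thesis using nU le "1.prems"(2) lex_eq[of u v] by (auto simp add: phi.simps lex_cns)
    next
      case u0: False
      show ?thesis
      proof (cases "0 \<le> v 0")
        case True then show ?thesis using nU u0 by (simp add: phi.simps lex_cns)
      next
        case False
        have "lex_less (phi (sub F) (kap u)) (phi (sub F) (kap v))"
          using 1(1)[OF nU u0 fseg_sub[OF "1.prems"(1) nU]] kap_mono u0 False "1.prems"(2) by simp
        then show ?thesis using nU u0 False by (simp add: phi.simps lex_cns)
      qed
    qed
  qed
qed

lemma phi_onto_aux:
  "fseg F \<Longrightarrow> v \<in> F \<Longrightarrow> w \<in> F \<Longrightarrow> w n < v n \<Longrightarrow> \<forall>m<n. w m = v m \<Longrightarrow> \<exists>u. phi F u = v"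
proof (induction n arbitrary: F v w)
  case (0 F v w)
  show ?case
  proof (cases "F = UNIV")
    case True then show ?thesis by (auto simp: phi.simps)
  next
    case nU: False
    have "c0 F \<le> w 0" using c0_prop[OF "0.prems"(1) nU] "0.prems" by blast
    then have "c0 F < v 0" using "0.prems" by simp
    then show ?thesis using nU
      by (intro exI[of _ "cns (v 0 - c0 F - 1) (tlf v)"]) (simp add: phi.simps)
  qed
next
  case (Suc n F v w)
  show ?case
  proof (cases "F = UNIV")
    case True then show ?thesis by (auto simp: phi.simps)
  next
    case nU: False
    show ?thesis
    proof (cases "c0 F < v 0")
      case True then show ?thesis using nU
        by (intro exI[of _ "cns (v 0 - c0 F - 1) (tlf v)"]) (simp add: phi.simps)
    next
      case False
      have "c0 F \<le> v 0" using c0_prop[OF Suc.prems(1) nU] Suc.prems by blast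
      with False have v0: "v 0 = c0 F" by simp
      have w0: "w 0 = v 0" using Suc.prems by auto
      have tv: "tlf v \<in> sub F" and tw: "tlf w \<in> sub F"
        using mem_iff[OF Suc.prems(1) nU] Suc.prems v0 w0 by auto
      obtain u' where u': "phi (sub F) u' = tlf v"
      proof -
        have "tlf w n < tlf v n" "\<forall>m<n. tlf w m = tlf v m" using Suc.prems by auto
        then show ?thesis using Suc.IH[OF fseg_sub[OF Suc.prems(1) nU] tv tw] that by blast
      qed
      obtain u where u: "u 0 < 0" "kap u = u'" using kap_onto by blast
      have "phi F u = cns (c0 F) (tlf v)" using u u' nU by (simp add: phi.simps)
      then show ?thesis using v0 by (metis cns_tlf)
    qed
  qed
qed

lemma phi_onto: "fseg F \<Longrightarrow> v \<in> F \<Longrightarrow> \<exists>u. phi F u = v"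
proof -
  assume F: "fseg F" "v \<in> F"
  then obtain w where "w \<in> F" "lex_less w v" unfolding fseg_def by blast
  then show ?thesis using phi_onto_aux[OF F(1) F(2)] unfolding lex_less_def by blast
qed

definition ng :: "(nat \<Rightarrow> int) \<Rightarrow> nat \<Rightarrow> int" where "ng u = (\<lambda>n. - u n)"
lemma ng_ng[simp]: "ng (ng u) = u" by (simp add: ng_def)
lemma lex_ng: "lex_less (ng u) (ng v) \<longleftrightarrow> lex_less v u"
  unfolding lex_less_def ng_def by auto
lemma te_ng: "tail_equiv a b \<Longrightarrow> tail_equiv (ng a) (ng b)"
  unfolding tail_equiv_def ng_def by auto

lemma smono_iff:
  assumes "\<And>u v. lex_less u v \<Longrightarrow> lex_less (g u) (g v)"
  shows "lex_less u v \<longleftrightarrow> lex_less (g u) (g v)"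
  using assms lex_total lex_asym lex_irrefl by metis

lemma smono_inj:
  assumes "\<And>u v. lex_less u v \<Longrightarrow> lex_less (g u) (g v)"
  shows "inj g"
  unfolding inj_def using assms lex_total lex_irrefl by metis

theorem mainTheorem9:
  assumes "open_interval I"
  shows "\<exists>f. order_iso_onto f I \<and> (\<forall>A. tail_closed A \<longrightarrow> f ` A = A \<inter> I)"
proof -
  have Ine: "I \<noteq> {}"
    and Iconv: "\<And>x y z. x \<in> I \<Longrightarrow> z \<in> I \<Longrightarrow> lex_less x y \<Longrightarrow> lex_less y z \<Longrightarrow> y \<in> I"
    and Iup: "\<And>x. x \<in> I \<Longrightarrow> \<exists>y\<in>I. lex_less x y"
    and Idown: "\<And>x. x \<in> I \<Longrightarrow> \<exists>y\<in>I. lex_less y x"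
    using assms unfolding open_interval_def by blast+
  define F where "F = {y. \<exists>x\<in>I. x = y \<or> lex_less x y}"
  have IF: "I \<subseteq> F" unfolding F_def by blast
  have fF: "fseg F" unfolding fseg_def
  proof (intro conjI allI impI ballI)
    show "F \<noteq> {}" using IF Ine by blast
  next
    fix x y assume "x \<in> F" "lex_less x y"
    then show "y \<in> F" unfolding F_def using lex_trans by blast
  next
    fix x assume "x \<in> F"
    then obtain z where z: "z \<in> I" "z = x \<or> lex_less z x" unfolding F_def by blast
    obtain y where "y \<in> I" "lex_less y z" using Idown z(1) by blast
    then show "\<exists>y\<in>F. lex_less y x" using z IF lex_trans by blast
  qed
  define \<phi> where "\<phi> = phi F"
  have \<phi>in: "\<phi> u \<in> F" for u using phi_in[OF fF] unfolding \<phi>_def by blast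
  have \<phi>on: "v \<in> F \<Longrightarrow> \<exists>u. \<phi> u = v" for v using phi_onto[OF fF] unfolding \<phi>_def by blast
  have \<phi>m: "lex_less u v \<Longrightarrow> lex_less (\<phi> u) (\<phi> v)" for u v using phi_mono[OF fF] unfolding \<phi>_def by blast
  have \<phi>iff: "lex_less u v \<longleftrightarrow> lex_less (\<phi> u) (\<phi> v)" for u v by (rule smono_iff) (rule \<phi>m)
  have \<phi>te: "tail_equiv (\<phi> u) u" for u unfolding \<phi>_def by (rule phi_te)
  define Jn where "Jn = {u. \<phi> (ng u) \<in> I}"
  have fJ: "fseg Jn" unfolding fseg_def
  proof (intro conjI allI impI ballI)
    obtain x where "x \<in> I" using Ine by blast
    then obtain u where "\<phi> u = x" using \<phi>on IF by blast
    then have "ng u \<in> Jn" unfolding Jn_def using \<open>x \<in> I\<close> by simp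
    then show "Jn \<noteq> {}" by blast
  next
    fix x y assume x: "x \<in> Jn" and xy: "lex_less x y"
    have a: "lex_less (\<phi> (ng y)) (\<phi> (ng x))" using xy \<phi>m lex_ng by blast
    obtain z where z: "z \<in> I" "z = \<phi> (ng y) \<or> lex_less z (\<phi> (ng y))" using \<phi>in[of "ng y"] unfolding F_def by blast
    have "\<phi> (ng y) \<in> I" using z a x Iconv unfolding Jn_def by blast
    then show "y \<in> Jn" unfolding Jn_def by simp
  next
    fix x assume x: "x \<in> Jn"
    then obtain y where y: "y \<in> I" "lex_less (\<phi> (ng x)) y" using Iup unfolding Jn_def by blast
    then obtain u where u: "\<phi> u = y" using \<phi>on IF by blast
    then have "lex_less (ng x) u" using y \<phi>iff by blast
    then have "lex_less (ng u) x" using lex_ng[of u "ng x"] by simp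
    moreover have "ng u \<in> Jn" unfolding Jn_def using u y by simp
    ultimately show "\<exists>y\<in>Jn. lex_less y x" by blast
  qed
  define \<psi> where "\<psi> = phi Jn"
  define f where "f = (\<lambda>u. \<phi> (ng (\<psi> (ng u))))"
  have fin: "f u \<in> I" for u
    using phi_in[OF fJ, of "ng u"] unfolding f_def \<psi>_def Jn_def by simp
  have fon: "\<exists>u. f u = v" if vI: "v \<in> I" for v
  proof -
    obtain a where a: "\<phi> a = v" using \<phi>on IF vI by blast
    then have "ng a \<in> Jn" unfolding Jn_def using vI by simp
    then obtain b where "\<psi> b = ng a" using phi_onto[OF fJ] unfolding \<psi>_def by blast
    then have "f (ng b) = v" unfolding f_def using a by simp
    then show ?thesis by blast
  qed
  have fm: "lex_less (f u) (f v)" if "lex_less u v" for u v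
  proof -
    have "lex_less (ng v) (ng u)" using that lex_ng by simp
    then have "lex_less (\<psi> (ng v)) (\<psi> (ng u))" using phi_mono[OF fJ] unfolding \<psi>_def by blast
    then have "lex_less (ng (\<psi> (ng u))) (ng (\<psi> (ng v)))" using lex_ng by simp
    then show ?thesis unfolding f_def using \<phi>m by blast
  qed
  have fte: "tail_equiv u (f u)" for u
  proof -
    have "tail_equiv (\<psi> (ng u)) (ng u)" unfolding \<psi>_def by (rule phi_te)
    then have "tail_equiv (ng (\<psi> (ng u))) u" using te_ng by fastforce
    then have "tail_equiv (f u) u" unfolding f_def using te_trans \<phi>te by blast
    then show ?thesis using te_sym by blast
  qed
  have rng: "f ` UNIV = I" using fin fon by blast
  have "order_iso_onto f I"
    unfolding order_iso_onto_def bij_betw_def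
    using smono_inj[of f] smono_iff[of f] fm rng by blast
  moreover have "\<forall>A. tail_closed A \<longrightarrow> f ` A = A \<inter> I"
  proof (intro allI impI)
    fix A assume A: "tail_closed A"
    show "f ` A = A \<inter> I"
    proof
      show "f ` A \<subseteq> A \<inter> I" using A fte fin unfolding tail_closed_def by blast
    next
      show "A \<inter> I \<subseteq> f ` A"
      proof
        fix v assume v: "v \<in> A \<inter> I"
        then obtain u where u: "f u = v" using fon by blast
        then have "u \<in> A" using A v fte[of u] te_sym unfolding tail_closed_def by blast
        then show "v \<in> f ` A" using u by blast
      qed
    qed
  qed
  ultimately show ?thesis by blast
qed

end
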